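(* For every prime power $q$, the number $J_{\mathrm{H}}(q)$ of distinct $j$-invariants of Hessian curves over $\mathbb{F}_q$ is $$J_{\mathrm{H}}(q)=\begin{cases}q-1,& q\equiv0\pmod3,\\ \lfloor (q+11)/12\rfloor,& q\equiv1\pmod3,\\ \lfloor q/2\rfloor,& q\equiv2\pmod3.\end{cases}$$
   Context: For $u\in\mathbb{F}_q$ with $u^3\ne27$, the Hessian curve $E_{\mathrm{H},u}$ is the elliptic curve $X^3+Y^3+1=uXY$, with $j(E_{\mathrm{H},u})=\left(\frac{u(u^3+216)}{u^3-27}\right)^3$. $J_{\mathrm{H}}(q)=\#\{j(E_{\mathrm{H},u}): u\in\mathbb{F}_q,\ u^3\ne27\}$. *)

theory Defs
  imports Main
begin

text \<open>j-invariant of the Hessian curve X^3+Y^3+1 = uXY over a field.\<close>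
definition hessian_j :: "'a::field \<Rightarrow> 'a" where
  "hessian_j u = (u * (u^3 + 216) / (u^3 - 27))^3"

definition J_H :: "'a::{finite,field} itself \<Rightarrow> nat" where
  "J_H _ = card (hessian_j ` {u :: 'a. u^3 \<noteq> 27})"

end

theory Submission
  imports Defs
begin


lemma card_fibers:
  assumes "finite S" "\<And>u. u \<in> S \<Longrightarrow> card {v\<in>S. f v = f u} = k"
  shows "card S = k * card (f ` S)"
proof -
  have S: "S = (\<Union>c\<in>f ` S. {v\<in>S. f v = c})" by auto
  have "card S = (\<Sum>c\<in>f ` S. card {v\<in>S. f v = c})"
    by (subst S, rule card_UN_disjoint) (use assms(1) in auto)
  also have "\<dots> = (\<Sum>c\<in>f ` S. k)"
    by (rule sum.cong) (auto simp: assms(2))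
  finally show ?thesis by simp
qed

lemma orbit3:
  assumes "finite S" "\<forall>x\<in>S. g x \<in> S" "\<forall>x\<in>S. g (g (g x)) = x"
  shows "card S mod 3 = card {x\<in>S. g x = x} mod 3"
  using assms
proof (induction "card S" arbitrary: S rule: less_induct)
  case less
  show ?case
  proof (cases "\<exists>x\<in>S. g x \<noteq> x")
    case False
    then have "{x\<in>S. g x = x} = S" by auto
    then show ?thesis by simp
  next
    case True
    then obtain x where x: "x \<in> S" "g x \<noteq> x" by auto
    define Ob where "Ob = {x, g x, g (g x)}"
    have g3: "g (g (g x)) = x" using less.prems x by auto
    have d1: "g (g x) \<noteq> x" using g3 x(2) by metis
    have d2: "g (g x) \<noteq> g x" using g3 x(2) by metis
    have cO: "card Ob = 3" using x(2) d1 d2 by (auto simp: Ob_def card_insert_if)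
    have OS: "Ob \<subseteq> S" using less.prems x by (auto simp: Ob_def)
    define S' where "S' = S - Ob"
    have "card Ob \<le> card S" using OS less.prems(1) by (rule card_mono[rotated])
    then have cS: "card S = card S' + 3" using OS cO less.prems(1)
      by (simp add: S'_def card_Diff_subset finite_subset)
    have gS': "\<forall>y\<in>S'. g y \<in> S'"
    proof
      fix y assume y: "y \<in> S'"
      then have yS: "y \<in> S" "y \<notin> Ob" by (auto simp: S'_def)
      have gy: "g (g (g y)) = y" using less.prems yS by auto
      have "g y \<notin> Ob"
      proof
        assume "g y \<in> Ob"
        then have "g y = x \<or> g y = g x \<or> g y = g (g x)" by (auto simp: Ob_def)
        then show False
        proof (elim disjE)
          assume "g y = x" then have "y = g (g x)" using gy by metis
          then show False using yS by (auto simp: Ob_def)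
        next
          assume "g y = g x" then have "y = x" using gy g3 by metis
          then show False using yS by (auto simp: Ob_def)
        next
          assume "g y = g (g x)" then have "y = g x" using gy g3 by metis
          then show False using yS by (auto simp: Ob_def)
        qed
      qed
      then show "g y \<in> S'" using less.prems yS by (auto simp: S'_def)
    qed
    have fx: "{y\<in>S'. g y = y} = {y\<in>S. g y = y}"
      using x(2) d1 d2 g3 by (auto simp: S'_def Ob_def)
    have "card S' mod 3 = card {y\<in>S'. g y = y} mod 3"
      by (rule less.hyps) (use cS less.prems gS' in \<open>auto simp: S'_def\<close>)
    then show ?thesis using cS fx by simp
  qed
qed



lemma char3_aux: assumes h: "(3::'a::{finite,field}) \<noteq> 0" shows "card (UNIV::'a set) mod 3 \<noteq> 0"
proof
  assume q: "card (UNIV::'a set) mod 3 = 0"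
  define g where "g = (\<lambda>p::'a\<times>'a. (snd p, - fst p - snd p))"
  have g3: "\<forall>p\<in>UNIV. g (g (g p)) = p" by (simp add: g_def)
  have "card (UNIV::('a\<times>'a) set) mod 3 = card {p\<in>(UNIV::('a\<times>'a) set). g p = p} mod 3"
    by (rule orbit3) (use g3 in auto)
  moreover have "{p\<in>(UNIV::('a\<times>'a) set). g p = p} = {(0,0)}"
  proof -
    have "p = (0,0)" if "g p = p" for p
    proof -
      obtain x y where p: "p = (x,y)" by fastforce
      have "y = x" "-x-y = y" using that by (auto simp: g_def p)
      then have "3 * x = 0" by (simp add: algebra_simps)
      then have "x = 0" using h by simp
      then show ?thesis using p \<open>y = x\<close> by simp
    qed
    moreover have "g (0,0) = (0,0)" by (simp add: g_def)
    ultimately show ?thesis by blast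
  qed
  moreover have "card (UNIV::('a\<times>'a) set) = card (UNIV::'a set) * card (UNIV::'a set)"
    by (metis UNIV_Times_UNIV card_cartesian_product)
  ultimately have A: "(card (UNIV::'a set) * card (UNIV::'a set)) mod 3 = 1" by simp
  have "3 dvd (card (UNIV::'a set) * card (UNIV::'a set))" using q by auto
  with A show False by auto
qed

lemma char3_iff: "(3::'a::{finite,field}) = 0 \<longleftrightarrow> card (UNIV::'a set) mod 3 = 0"
proof
  assume h: "(3::'a) = 0"
  have "card (UNIV::'a set) mod 3 = card {x\<in>(UNIV::'a set). x + 1 = x} mod 3"
  proof (rule orbit3)
    have "x + 1 + 1 + 1 = x + 3" for x :: 'a by (simp add: algebra_simps)
    then show "\<forall>x\<in>UNIV. x + 1 + 1 + 1 = (x::'a)" using h by simp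
  qed auto
  then show "card (UNIV::'a set) mod 3 = 0" by simp
next
  assume "card (UNIV::'a set) mod 3 = 0"
  then show "(3::'a) = 0" using char3_aux[where 'a='a] by (rule contrapos_pp) simp
qed

lemma cube_one: "(x::'a::field)^3 = 1 \<longleftrightarrow> x = 1 \<or> x^2 + x + 1 = 0"
proof -
  have "x^3 - 1 = (x - 1) * (x^2 + x + 1)" by (simp add: algebra_simps power2_eq_square power3_eq_cube)
  then have "x^3 = 1 \<longleftrightarrow> (x - 1) * (x^2 + x + 1) = 0" by auto
  then show ?thesis by simp
qed

lemma omega_imp:
  assumes h: "(3::'a::{finite,field}) \<noteq> 0" and w: "(w::'a)^2 + w + 1 = 0"
  shows "card (UNIV::'a set) mod 3 = 1"
proof -
  have w3: "w*(w*w) = 1" using w cube_one[of w] by (simp add: power3_eq_cube mult.assoc)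
  have w1: "w \<noteq> 1" using w h by auto
  have "card (UNIV::'a set) mod 3 = card {x\<in>(UNIV::'a set). w * x = x} mod 3"
  proof (rule orbit3)
    show "\<forall>x\<in>UNIV. w * (w * (w * x)) = x" using w3 by (simp add: mult.assoc[symmetric])
  qed auto
  moreover have "{x\<in>(UNIV::'a set). w * x = x} = {0}"
  proof -
    have "x = 0" if "w * x = x" for x
    proof -
      have "(w - 1) * x = 0" using that by (simp add: algebra_simps)
      then show ?thesis using w1 by simp
    qed
    then show ?thesis by auto
  qed
  ultimately show ?thesis by simp
qed

lemma omega_exists:
  assumes q: "card (UNIV::'a::{finite,field} set) mod 3 = 1"
  shows "\<exists>w::'a. w^2 + w + 1 = 0"
proof (rule ccontr)
  assume nw: "\<not> (\<exists>w::'a. w^2 + w + 1 = 0)"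
  define S where "S = (UNIV - {0::'a}) \<times> (UNIV - {0::'a})"
  define g where "g = (\<lambda>p::'a\<times>'a. (snd p, inverse (fst p * snd p)))"
  have gS: "\<forall>p\<in>S. g p \<in> S" by (auto simp: S_def g_def)
  have g3: "\<forall>p\<in>S. g (g (g p)) = p" by (auto simp: S_def g_def field_simps)
  have "card S mod 3 = card {p\<in>S. g p = p} mod 3"
    by (rule orbit3) (use gS g3 in \<open>auto simp: S_def\<close>)
  moreover have "{p\<in>S. g p = p} = {(1,1)}"
  proof -
    have "p = (1,1)" if "p \<in> S" "g p = p" for p
    proof -
      obtain x y where p: "p = (x,y)" by fastforce
      have xy: "x \<noteq> 0" "y \<noteq> 0" "y = x" "inverse (x*y) = y" using that by (auto simp: g_def p S_def)
      then have "x*(x*x) = 1" by (simp add: field_simps)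
      then have "x^3 = 1" by (simp add: power3_eq_cube mult.assoc)
      then have "x = 1" using nw cube_one by blast
      then show ?thesis using p xy by simp
    qed
    moreover have "g (1,1) = (1,1)" "(1,1) \<in> S" by (auto simp: g_def S_def)
    ultimately show ?thesis by blast
  qed
  moreover have "card S = (card (UNIV::'a set) - 1) * (card (UNIV::'a set) - 1)"
    by (simp add: S_def card_cartesian_product card_Diff_singleton)
  ultimately have A: "((card (UNIV::'a set) - 1) * (card (UNIV::'a set) - 1)) mod 3 = 1" by simp
  have c: "card (UNIV::'a set) > 0" by (simp add: card_gt_0_iff)
  have "3 dvd (card (UNIV::'a set) - 1)" using q c by presburger
  then have "3 dvd ((card (UNIV::'a set) - 1) * (card (UNIV::'a set) - 1))" by auto
  with A show False by auto
qed



definition tt :: "'a::field \<Rightarrow> 'a" where "tt u = u*(u^3+216)/(u^3-27)"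

lemma hj_tt: "hessian_j u = (tt u)^3" by (simp add: hessian_j_def tt_def)

lemma poly_id: "v*(v^3+216)*(u^3-27) - u*(u^3+216)*(v^3-27) =
  (v-u) * (v*(u-3) - 3*(u+6)) * ((u*v+18)^2 + 3*(u*v+18)*(u+v-6) + 9*(u+v-6)^2)"
  for u v :: "'a::comm_ring_1"
  by (simp add: algebra_simps power2_eq_square power3_eq_cube)

lemma fiber_poly:
  fixes u v :: "'a::field"
  assumes "u^3 \<noteq> 27" "v^3 \<noteq> 27"
  shows "tt v = tt u \<longleftrightarrow> (v-u) * (v*(u-3) - 3*(u+6)) * ((u*v+18)^2 + 3*(u*v+18)*(u+v-6) + 9*(u+v-6)^2) = 0"
proof -
  have "tt v = tt u \<longleftrightarrow> v*(v^3+216)*(u^3-27) = u*(u^3+216)*(v^3-27)"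
    using assms by (simp add: tt_def frac_eq_eq)
  also have "\<dots> \<longleftrightarrow> v*(v^3+216)*(u^3-27) - u*(u^3+216)*(v^3-27) = 0" by simp
  finally show ?thesis by (simp only: poly_id)
qed



lemma n27: "(3::'a::field) \<noteq> 0 \<Longrightarrow> (27::'a) \<noteq> 0"
proof -
  assume h: "(3::'a) \<noteq> 0"
  have "(3::'a)*(3*3) \<noteq> 0" using h by (simp only: mult_eq_0_iff de_Morgan_disj) blast
  then show ?thesis by simp
qed

lemma n9: "(3::'a::field) \<noteq> 0 \<Longrightarrow> (9::'a) \<noteq> 0"
proof -
  assume h: "(3::'a) \<noteq> 0"
  have "(3::'a)*3 \<noteq> 0" using h by (simp only: mult_eq_0_iff de_Morgan_disj) blast
  then show ?thesis by simp
qed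

definition sg :: "'a::field \<Rightarrow> 'a" where "sg u = 3*(u+6)/(u-3)"

lemma rho_in_D:
  fixes u a :: "'a::field"
  assumes h3: "(3::'a) \<noteq> 0" and a3: "a^3 = 1" and u: "u^3 \<noteq> 27"
  shows "(3*a*(u+6*a)/(u-3*a))^3 \<noteq> 27" and "u \<noteq> 3*a"
proof -
  have e1: "u^3 - 27 = (u-3*a)*(u^2+3*a*u+9*a^2)"
    using a3 by (simp add: algebra_simps power2_eq_square power3_eq_cube)
  have nz: "u-3*a \<noteq> 0" "u^2+3*a*u+9*a^2 \<noteq> 0" using e1 u by auto
  then show "u \<noteq> 3*a" by simp
  show "(3*a*(u+6*a)/(u-3*a))^3 \<noteq> 27"
  proof
    assume "(3*a*(u+6*a)/(u-3*a))^3 = 27"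
    then have "(3*a*(u+6*a))^3 = 27*(u-3*a)^3" using nz by (simp add: power_divide field_simps)
    moreover have "(3*a*(u+6*a))^3 = 27*(a^3)*(u+6*a)^3" by (simp add: power_mult_distrib)
    ultimately have "27*(u+6*a)^3 = 27*(u-3*a)^3" using a3 by simp
    then have "27*((u+6*a)^3 - (u-3*a)^3) = 0" by (simp add: algebra_simps)
    moreover have "(u+6*a)^3 - (u-3*a)^3 = 27*a*(u^2+3*a*u+9*a^2)"
      using a3 by (simp add: algebra_simps power2_eq_square power3_eq_cube)
    moreover have "(27::'a) \<noteq> 0" using h3 by (rule n27)
    moreover have "a \<noteq> 0" using a3 by auto
    ultimately have "(u+6*a)^3 - (u-3*a)^3 = 0" by (metis mult_eq_0_iff)
    then have "27*a*(u^2+3*a*u+9*a^2) = 0" using \<open>(u+6*a)^3 - (u-3*a)^3 = 27*a*(u^2+3*a*u+9*a^2)\<close> by simp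
    then show False using nz \<open>a \<noteq> 0\<close> n27[OF h3] by simp
  qed
qed

lemma cube_inj_now:
  fixes x y :: "'a::field"
  assumes nw: "\<not> (\<exists>w::'a. w^2 + w + 1 = 0)" and e: "x^3 = y^3"
  shows "x = y"
proof (cases "y = 0")
  case True then show ?thesis using e by simp
next
  case False
  then have "(x/y)^3 = 1" using e by (simp add: power_divide)
  then have "x/y = 1" using cube_one nw by blast
  then show ?thesis using False by simp
qed

lemma Q_now:
  fixes A B :: "'a::field"
  assumes h3: "(3::'a) \<noteq> 0" and nw: "\<not> (\<exists>w::'a. w^2 + w + 1 = 0)"
    and Q: "A^2 + 3*A*B + 9*B^2 = 0"
  shows "A = 0 \<and> B = 0"
proof (cases "B = 0")
  case True then show ?thesis using Q by simp
next
  case False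
  define x where "x = A/(3*B)"
  have A: "A = 3*B*x" using False h3 by (simp add: x_def)
  have "9*B^2*(x^2 + x + 1) = 0" using Q unfolding A by (simp add: algebra_simps power2_eq_square)
  moreover have "9*B^2 \<noteq> 0" using False n9[OF h3] by simp
  ultimately have "x^2 + x + 1 = 0" by simp
  then show ?thesis using nw by blast
qed

lemma fiber_now:
  fixes u v :: "'a::field"
  assumes h3: "(3::'a) \<noteq> 0" and nw: "\<not> (\<exists>w::'a. w^2 + w + 1 = 0)"
    and u: "u^3 \<noteq> 27" and v: "v^3 \<noteq> 27"
  shows "tt v = tt u \<longleftrightarrow> v = u \<or> v = sg u \<or> (u+v-6 = 0 \<and> u*v+18 = 0)"
proof -
  have u3: "u \<noteq> 3" using rho_in_D(2)[OF h3, of 1 u] u by simp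
  have s: "v*(u-3) - 3*(u+6) = 0 \<longleftrightarrow> v = sg u" using u3 by (auto simp: sg_def field_simps)
  have q: "(u*v+18)^2 + 3*(u*v+18)*(u+v-6) + 9*(u+v-6)^2 = 0 \<longleftrightarrow> (u+v-6 = 0 \<and> u*v+18 = 0)"
    using Q_now[OF h3 nw, of "u*v+18" "u+v-6"] by auto
  show ?thesis unfolding fiber_poly[OF u v] using s q by auto
qed

lemma sg_D:
  fixes u :: "'a::field"
  assumes h3: "(3::'a) \<noteq> 0" and u: "u^3 \<noteq> 27"
  shows "(sg u)^3 \<noteq> 27"
  using rho_in_D(1)[OF h3, of 1 u] u by (simp add: sg_def)

lemma root_D:
  fixes r :: "'a::field"
  assumes h3: "(3::'a) \<noteq> 0" and r: "r^2 - 6*r - 18 = 0"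
  shows "r^3 \<noteq> 27"
proof
  assume "r^3 = 27"
  moreover have "r^3 - 27 = (r+6)*(r^2-6*r-18) + 27*(2*r+3)"
    by (simp add: algebra_simps power2_eq_square power3_eq_cube)
  ultimately have "27*(2*r+3) = 0" using r by simp
  then have e: "2*r+3 = 0" using n27[OF h3] by (metis mult_eq_0_iff)
  have "4*(r^2-6*r-18) = (2*r+3)^2 - 18*(2*r+3) - 27"
    by (simp add: algebra_simps power2_eq_square)
  then have "(27::'a) = 0" using e r by simp
  then show False using n27[OF h3] by simp
qed

lemma card_fiber_now:
  fixes u :: "'a::field"
  assumes h3: "(3::'a) \<noteq> 0" and nw: "\<not> (\<exists>w::'a. w^2 + w + 1 = 0)" and u: "u^3 \<noteq> 27"
  shows "card {v. v^3 \<noteq> 27 \<and> tt v = tt u} = (if (2::'a) = 0 \<and> u = 0 then 1 else 2)"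
proof -
  have u3: "u \<noteq> 3" using rho_in_D(2)[OF h3, of 1 u] u by simp
  have sgfix: "sg u = u \<longleftrightarrow> u^2 - 6*u - 18 = 0"
  proof -
    have "sg u = u \<longleftrightarrow> 3*(u+6) = u*(u-3)" using u3 by (auto simp: sg_def field_simps)
    also have "\<dots> \<longleftrightarrow> u^2 - 6*u - 18 = 0" by (auto simp: algebra_simps power2_eq_square)
    finally show ?thesis .
  qed
  have two: "(2::'a) = 0 \<Longrightarrow> (6::'a) = 0 \<and> (18::'a) = 0"
  proof -
    assume "(2::'a) = 0"
    moreover have "(6::'a) = 2*3" "(18::'a) = 2*9" by simp_all
    ultimately show ?thesis by simp
  qed
  show ?thesis
  proof (cases "u^2 - 6*u - 18 = 0")
    case False
    have F: "{v. v^3 \<noteq> 27 \<and> tt v = tt u} = {u, sg u}"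
    proof (intro set_eqI iffI)
      fix v assume "v \<in> {v. v^3 \<noteq> 27 \<and> tt v = tt u}"
      then have v: "v^3 \<noteq> 27" "tt v = tt u" by auto
      have "\<not> (u+v-6 = 0 \<and> u*v+18 = 0)"
      proof
        assume a: "u+v-6 = 0 \<and> u*v+18 = 0"
        then have vv: "v = 6 - u" by (simp add: algebra_simps)
        have "u^2 - 6*u - 18 = - (u*v+18)" unfolding vv by (simp add: algebra_simps power2_eq_square)
        then have "u^2 - 6*u - 18 = 0" using a by simp
        then show False using False by simp
      qed
      then show "v \<in> {u, sg u}" using fiber_now[OF h3 nw u v(1)] v by auto
    next
      fix v assume "v \<in> {u, sg u}"
      then show "v \<in> {v. v^3 \<noteq> 27 \<and> tt v = tt u}"
        using u sg_D[OF h3 u] fiber_now[OF h3 nw u sg_D[OF h3 u]] by auto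
    qed
    have "sg u \<noteq> u" using sgfix False by simp
    then have "card {v. v^3 \<noteq> 27 \<and> tt v = tt u} = 2" unfolding F by simp
    moreover have "\<not> ((2::'a) = 0 \<and> u = 0)" using False two by auto
    ultimately show ?thesis by simp
  next
    case True
    have r: "(6-u)^2 - 6*(6-u) - 18 = 0" using True by (simp add: algebra_simps power2_eq_square)
    have F: "{v. v^3 \<noteq> 27 \<and> tt v = tt u} = {u, 6-u}"
    proof (intro set_eqI iffI)
      fix v assume "v \<in> {v. v^3 \<noteq> 27 \<and> tt v = tt u}"
      then have v: "v^3 \<noteq> 27" "tt v = tt u" by auto
      have "v = u \<or> v = sg u \<or> (u+v-6 = 0 \<and> u*v+18 = 0)" using fiber_now[OF h3 nw u v(1)] v by auto
      then show "v \<in> {u, 6-u}" using sgfix True by (auto simp: algebra_simps)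
    next
      fix v assume "v \<in> {u, 6-u}"
      moreover have "tt (6-u) = tt u"
        using fiber_now[OF h3 nw u root_D[OF h3 r]] True by (auto simp: algebra_simps power2_eq_square)
      ultimately show "v \<in> {v. v^3 \<noteq> 27 \<and> tt v = tt u}"
        using u root_D[OF h3 r] by auto
    qed
    show ?thesis
    proof (cases "(2::'a) = 0")
      case True2: True
      then have "u^2 = 0" using True two by simp
      then have u0: "u = 0" by simp
      have "6 - u = u" using u0 two True2 by simp
      then show ?thesis unfolding F using u0 True2 by simp
    next
      case False2: False
      have "6 - u \<noteq> u"
      proof
        assume "6 - u = u"
        then have "2*(u-3) = 0" by (simp add: algebra_simps)
        then have "u - 3 = 0" using False2 by (metis mult_eq_0_iff)
        then show False using u3 by simp
      qed
      then show ?thesis unfolding F using False2 by auto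
    qed
  qed
qed

lemma count_now:
  assumes h3: "(3::'a::{finite,field}) \<noteq> 0" and nw: "\<not> (\<exists>w::'a. w^2 + w + 1 = 0)"
  shows "card (hessian_j ` {u::'a. u^3 \<noteq> 27}) = card (UNIV::'a set) div 2"
proof -
  define D where "D = {u::'a. u^3 \<noteq> 27}"
  have D: "D = UNIV - {3}"
  proof -
    have "u^3 = 27 \<longleftrightarrow> u = 3" for u :: 'a
    proof
      assume "u^3 = 27" then have "u^3 = 3^3" by simp
      then show "u = 3" by (rule cube_inj_now[OF nw])
    qed simp
    then show ?thesis by (auto simp: D_def)
  qed
  have cD: "card D = card (UNIV::'a set) - 1" unfolding D by (simp add: card_Diff_singleton)
  have "hessian_j ` D = (\<lambda>x. x^3) ` (tt ` D)" by (auto simp: hj_tt image_image)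
  moreover have "inj_on (\<lambda>x::'a. x^3) (tt ` D)" by (auto intro: inj_onI cube_inj_now[OF nw])
  ultimately have cJ: "card (hessian_j ` D) = card (tt ` D)" by (simp add: card_image)
  have fib: "{v\<in>D. tt v = tt u} = {v. v^3 \<noteq> 27 \<and> tt v = tt u}" for u by (auto simp: D_def)
  have cfib: "u \<in> D \<Longrightarrow> card {v\<in>D. tt v = tt u} = (if (2::'a) = 0 \<and> u = 0 then 1 else 2)" for u
    unfolding fib using card_fiber_now[OF h3 nw] by (simp add: D_def)
  have finD: "finite D" by simp
  have "card (tt ` D) = card (UNIV::'a set) div 2"
  proof (cases "(2::'a) = 0")
    case False
    have "card D = 2 * card (tt ` D)" by (rule card_fibers[OF finD]) (use cfib False in auto)
    then show ?thesis using cD by simp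
  next
    case True
    have 0: "(0::'a) \<in> D" using n27[OF h3] by (simp add: D_def)
    have f0: "{v\<in>D. tt v = tt 0} = {0}"
    proof -
      have "card {v\<in>D. tt v = tt 0} = 1" using cfib[OF 0] True by simp
      moreover have "0 \<in> {v\<in>D. tt v = tt 0}" using 0 by simp
      ultimately show ?thesis by (metis card_1_singletonE singletonD)
    qed
    define S where "S = D - {0}"
    have fibS: "u \<in> S \<Longrightarrow> {v\<in>S. tt v = tt u} = {v\<in>D. tt v = tt u}" for u
    proof -
      assume u: "u \<in> S"
      have "tt 0 \<noteq> tt u"
      proof
        assume "tt 0 = tt u"
        then have "u \<in> {v\<in>D. tt v = tt 0}" using u by (auto simp: S_def)
        then show False using f0 u by (auto simp: S_def)
      qed
      then show ?thesis by (auto simp: S_def)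
    qed
    have "card S = 2 * card (tt ` S)"
      by (rule card_fibers) (use fibS cfib in \<open>auto simp: S_def\<close>)
    moreover have "card S = card (UNIV::'a set) - 2" using cD 0 by (simp add: S_def card_Diff_singleton)
    moreover have "tt ` D = insert (tt 0) (tt ` S)" using 0 by (auto simp: S_def)
    moreover have "tt 0 \<notin> tt ` S"
    proof
      assume "tt 0 \<in> tt ` S"
      then obtain u where "u \<in> S" "tt u = tt 0" by auto
      then have "u \<in> {v\<in>D. tt v = tt 0}" by (auto simp: S_def)
      then show False using f0 \<open>u \<in> S\<close> by (auto simp: S_def)
    qed
    ultimately have "card (tt ` D) = card (tt ` S) + 1" "card (UNIV::'a set) - 2 = 2 * card (tt ` S)"
      by (simp_all add: card_insert_if)
    moreover have "card (UNIV::'a set) \<ge> 2"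
    proof -
      have "{0::'a, 1} \<subseteq> UNIV" by simp
      then have "card {0::'a, 1} \<le> card (UNIV::'a set)" by (rule card_mono[rotated]) simp
      then show ?thesis by simp
    qed
    ultimately show ?thesis by linarith
  qed
  then show ?thesis using cJ by (simp add: D_def)
qed



lemma count_char3:
  assumes h3: "(3::'a::{finite,field}) = 0"
  shows "card (hessian_j ` {u::'a. u^3 \<noteq> 27}) = card (UNIV::'a set) - 1"
proof -
  have z27: "(27::'a) = 0" and z216: "(216::'a) = 0"
  proof -
    have "(27::'a) = 3*9" "(216::'a) = 3*72" by simp_all
    then show "(27::'a) = 0" "(216::'a) = 0" using h3 by simp_all
  qed
  have D: "{u::'a. u^3 \<noteq> 27} = UNIV - {0}" using z27 by auto
  have hj: "u \<noteq> 0 \<Longrightarrow> hessian_j u = u^3" for u :: 'a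
    using z27 z216 by (simp add: hessian_j_def power3_eq_cube)
  have inj: "inj_on (\<lambda>x::'a. x^3) (UNIV - {0})"
  proof (rule inj_onI)
    fix x y :: 'a assume "x^3 = y^3"
    moreover have "(x-y)^3 = x^3 - y^3 - 3*x*y*(x-y)" by (simp add: algebra_simps power3_eq_cube)
    ultimately have "(x-y)^3 = 0" using h3 by simp
    then show "x = y" by simp
  qed
  have "hessian_j ` (UNIV - {0}) = (\<lambda>x::'a. x^3) ` (UNIV - {0})" using hj by (auto simp: image_iff)
  moreover have "card ((\<lambda>x::'a. x^3) ` (UNIV - {0})) = card (UNIV - {0::'a})" using inj by (rule card_image)
  ultimately have "card (hessian_j ` (UNIV - {0::'a})) = card (UNIV - {0::'a})" by simp
  then show ?thesis unfolding D by (simp add: card_Diff_singleton)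
qed



definition LL :: "'a::field \<Rightarrow> 'a \<Rightarrow> 'a \<Rightarrow> 'a" where "LL a u v = u*v - 3*a*v - 3*a*u - 18*a^2"
definition rho :: "'a::field \<Rightarrow> 'a \<Rightarrow> 'a" where "rho a u = 3*a*(u+6*a)/(u-3*a)"

lemma Q_fact: "((u*v+18)^2 + 3*(u*v+18)*(u+v-6) + 9*(u+v-6)^2) =
   LL w u v * LL (w^2) u v + (w^2+w+1) * (324 + -54*v + 9*v^2 + -54*u + 36*u*v + 3*u*v^2 + 9*u^2 + 3*u^2*v + -324*w + 54*w*v + -9*w*v^2 + 54*w*u + -36*w*u*v + -9*w*u^2 + 18*w^2*u*v + 324*w^3 + -54*w^3*v + -54*w^3*u + -324*w^4)"
  for u v w :: "'a::field"
  by (simp add: LL_def algebra_simps power2_eq_square power3_eq_cube power4_eq_xxxx)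

lemma two_L_id: "LL a u v = -(LL c u u) + (u-3*a)*(u+v-6*c) - 18*a*(a+b+c) + 18*(a*b - c^2)"
  for a b c u v :: "'a::field"
  by (simp add: LL_def algebra_simps power2_eq_square)

lemma two_L:
  fixes a b c u v :: "'a::field"
  assumes h3: "(3::'a) \<noteq> 0" and ab: "a \<noteq> b" and s: "a+b+c = 0" and e: "a*b = c^2"
    and la: "LL a u v = 0" and lb: "LL b u v = 0"
  shows "LL c u u = 0"
proof -
  have "LL a u v - LL b u v = -3*((a-b)*(u+v+6*(a+b)))" by (simp add: LL_def algebra_simps power2_eq_square)
  then have "-3*((a-b)*(u+v+6*(a+b))) = 0" using la lb by simp
  then have "(a-b)*(u+v+6*(a+b)) = 0" using h3 by simp
  then have "u+v+6*(a+b) = 0" using ab by simp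
  moreover have "a + b = -c"
  proof -
    have "a + b = (a+b+c) - c" by simp
    then show ?thesis using s by simp
  qed
  ultimately have f: "u+v-6*c = 0" by (simp add: algebra_simps)
  have "0 = -(LL c u u) + (u-3*a)*(u+v-6*c) - 18*a*(a+b+c) + 18*(a*b - c^2)"
    using la two_L_id[of a u v c b] by simp
  then show ?thesis using f s e by simp
qed



context
  fixes w :: "'a::{finite,field}"
  assumes h3: "(3::'a) \<noteq> 0" and hw: "w^2 + w + 1 = 0"
begin

lemma w3: "w^3 = 1" using hw cube_one by blast
lemma w0: "w \<noteq> 0" using w3 by auto
lemma w1: "w \<noteq> 1" using hw h3 by auto
lemma wsum: "w + w^2 = -1"
proof -
  have "w + w^2 = (w^2+w+1) - 1" by simp
  then show ?thesis using hw by simp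
qed
lemma w22: "w^2 \<noteq> 1"
proof
  assume "w^2 = 1" then have "w + 2 = 0" using hw by (simp add: algebra_simps)
  then have "w = -2" by (simp add: eq_neg_iff_add_eq_0)
  then have "(4::'a) = 1" using \<open>w^2 = 1\<close> by (simp add: power2_eq_square)
  moreover have "(3::'a) = 4 - 1" by simp
  ultimately have "(3::'a) = 0" by simp
  then show False using h3 by simp
qed
lemma w2w: "w^2 \<noteq> w"
proof
  assume "w^2 = w" then have "w * (w - 1) = 0" by (simp add: algebra_simps power2_eq_square)
  then show False using w0 w1 by simp
qed
lemma w23: "(w^2)^3 = 1"
proof -
  have "(w^2)^3 = (w^3)^2" by (simp only: power_mult[symmetric]) simp
  then show ?thesis using w3 by simp
qed
lemma w4: "w^4 = w"
proof -
  have "w^4 = w^(3+1)" by simp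
  also have "\<dots> = w^3 * w" by (simp only: power_add power_one_right)
  finally show ?thesis using w3 by simp
qed

lemma cardC: "card {1, w, w^2} = 3" using w1 w22 w2w by (auto simp: card_insert_if)

lemma Cm3: "m \<in> {1, w, w^2} \<Longrightarrow> m^3 = 1" using w3 w23 by auto

lemma W1: "x^3 = y^3 \<longleftrightarrow> x = y \<or> x = w*y \<or> x = w^2*y"
proof -
  have e: "(x-w*y)*(x-w^2*y) = x^2 - (w+w^2)*x*y + w^3*y^2"
    by (simp add: algebra_simps power2_eq_square power3_eq_cube)
  have "x^3 - y^3 = (x-y)*(x^2 + x*y + y^2)" by (simp add: algebra_simps power2_eq_square power3_eq_cube)
  also have "\<dots> = (x-y)*((x-w*y)*(x-w^2*y))" unfolding e wsum w3 by (simp add: algebra_simps)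
  finally have "x^3 - y^3 = (x-y)*(x-w*y)*(x-w^2*y)" by (simp add: mult.assoc)
  then show ?thesis by (metis eq_iff_diff_eq_0 mult_eq_0_iff)
qed

lemma tt_mul: "m^3 = 1 \<Longrightarrow> tt (m*u) = m * tt u"
  by (simp add: tt_def power_mult_distrib)

lemma fiber_w:
  assumes u: "u^3 \<noteq> (27::'a)" and v: "v^3 \<noteq> 27"
  shows "tt v = tt u \<longleftrightarrow> v = u \<or> LL 1 u v = 0 \<or> LL w u v = 0 \<or> LL (w^2) u v = 0"
proof -
  have "v*(u-3) - 3*(u+6) = LL 1 u v" by (simp add: LL_def algebra_simps)
  moreover have "((u*v+18)^2 + 3*(u*v+18)*(u+v-6) + 9*(u+v-6)^2) = LL w u v * LL (w^2) u v"
    using Q_fact[of u v w] hw by simp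
  ultimately show ?thesis unfolding fiber_poly[OF u v] by simp
qed

lemma LL_rho:
  assumes a: "a^3 = 1" and u: "u^3 \<noteq> (27::'a)"
  shows "LL a u v = 0 \<longleftrightarrow> v = rho a u"
proof -
  have "u - 3*a \<noteq> 0" using rho_in_D(2)[OF h3 a u] by simp
  moreover have "LL a u v = v*(u-3*a) - 3*a*(u+6*a)" by (simp add: LL_def algebra_simps power2_eq_square)
  ultimately show ?thesis by (auto simp: rho_def field_simps)
qed

lemma T12:
  assumes a: "a^3 = 1" and u: "u^3 \<noteq> (27::'a)"
  shows "tt u = 12*a \<longleftrightarrow> LL a u u = 0"
proof -
  have id: "u*(u^3+216*a^3) - 12*a*(u^3-27*a^3) = (LL a u u)^2"
    by (simp add: LL_def algebra_simps power2_eq_square power3_eq_cube power4_eq_xxxx)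
  have d: "u^3 - 27 \<noteq> 0" using u by simp
  have "tt u = 12*a \<longleftrightarrow> u*(u^3+216) = 12*a*(u^3-27)" using d by (simp add: tt_def field_simps)
  also have "\<dots> \<longleftrightarrow> u*(u^3+216) - 12*a*(u^3-27) = 0" by simp
  also have "\<dots> \<longleftrightarrow> (LL a u u)^2 = 0" using id a by simp
  finally show ?thesis by simp
qed


lemma j0: "hessian_j u = 0 \<longleftrightarrow> tt u = 0" by (simp add: hj_tt)

lemma j1728:
  assumes u: "u^3 \<noteq> (27::'a)"
  shows "hessian_j u = 1728 \<longleftrightarrow> (LL 1 u u = 0 \<or> LL w u u = 0 \<or> LL (w^2) u u = 0)"
proof -
  have "hessian_j u = 1728 \<longleftrightarrow> (tt u)^3 = 12^3" by (simp add: hj_tt)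
  also have "\<dots> \<longleftrightarrow> tt u = 12*1 \<or> tt u = 12*w \<or> tt u = 12*w^2" unfolding W1 by (simp add: mult.commute)
  also have "\<dots> \<longleftrightarrow> (LL 1 u u = 0 \<or> LL w u u = 0 \<or> LL (w^2) u u = 0)"
    using T12[OF _ u, of 1] T12[OF w3 u] T12[OF w23 u] by simp
  finally show ?thesis .
qed

lemma rho_props:
  assumes a: "a^3 = 1" and u: "u^3 \<noteq> (27::'a)"
  shows "(rho a u)^3 \<noteq> 27"
  using rho_in_D(1)[OF h3 a u] by (simp add: rho_def)

lemma fib12:
  assumes u: "u^3 \<noteq> (27::'a)" and t0: "tt u \<noteq> 0"
    and n1: "LL 1 u u \<noteq> 0" and nw: "LL w u u \<noteq> 0" and nw2: "LL (w^2) u u \<noteq> 0"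
  shows "card {v. v^3 \<noteq> 27 \<and> hessian_j v = hessian_j u} = 12"
proof -
  define P where "P = {u, rho 1 u, rho w u, rho (w^2) u}"
  define C where "C = {1, w, w^2}"
  have a1: "(1::'a)^3 = 1" by simp
  have rt: "tt (rho a u) = tt u" if a: "a \<in> C" for a
  proof -
    have a3: "a^3 = 1" using a Cm3 by (simp add: C_def)
    have "LL a u (rho a u) = 0" using LL_rho[OF a3 u] by simp
    then show ?thesis using fiber_w[OF u rho_props[OF a3 u]] a by (auto simp: C_def)
  qed
  have PD: "x^3 \<noteq> 27 \<and> tt x = tt u" if "x \<in> P" for x
    using that rt u rho_props[OF a1 u] rho_props[OF w3 u] rho_props[OF w23 u] by (auto simp: P_def C_def)
  have DP: "v \<in> P" if "v^3 \<noteq> 27" "tt v = tt u" for v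
    using fiber_w[OF u that(1)] that(2) LL_rho[OF a1 u] LL_rho[OF w3 u] LL_rho[OF w23 u] by (auto simp: P_def)
  have ne: "u \<noteq> rho a u" if "a^3 = 1" "LL a u u \<noteq> 0" for a
    using that LL_rho[OF that(1) u, of u] by auto
  have ne2: "rho a u \<noteq> rho b u" if "a^3 = 1" "b^3 = 1" "a \<noteq> b" "a+b+c = 0" "a*b = c^2" "LL c u u \<noteq> 0" for a b c
  proof
    assume e: "rho a u = rho b u"
    have "LL a u (rho a u) = 0" "LL b u (rho a u) = 0"
      using LL_rho[OF that(1) u] LL_rho[OF that(2) u] e by auto
    then have "LL c u u = 0" by (rule two_L[OF h3 that(3) that(4) that(5)])
    then show False using that(6) by simp
  qed
  have s1: "1 + w + w^2 = 0" using hw by (simp add: algebra_simps)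
  have s2: "1 + w^2 + w = 0" using hw by (simp add: algebra_simps)
  have cP: "card P = 4"
  proof -
    have "u \<noteq> rho 1 u" "u \<noteq> rho w u" "u \<noteq> rho (w^2) u"
      using ne[OF a1 n1] ne[OF w3 nw] ne[OF w23 nw2] by auto
    moreover have "rho 1 u \<noteq> rho w u" using ne2[OF a1 w3 w1[symmetric] s1 _ nw2] w4 by (simp add: power2_eq_square[symmetric] power_mult[symmetric])
    moreover have "rho 1 u \<noteq> rho (w^2) u" using ne2[OF a1 w23 w22[symmetric] s2 _ nw] by simp
    moreover have "rho w u \<noteq> rho (w^2) u" using ne2[OF w3 w23 w2w[symmetric] _ _ n1] hw w3
      by (simp add: algebra_simps power2_eq_square power3_eq_cube)
    ultimately show ?thesis by (simp add: P_def)
  qed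
  define f where "f = (\<lambda>p::'a\<times>'a. fst p * snd p)"
  have Cm: "m \<in> C \<Longrightarrow> m^3 = 1" for m using Cm3 by (simp add: C_def)
  have fib: "{v. v^3 \<noteq> 27 \<and> hessian_j v = hessian_j u} = f ` (C \<times> P)"
  proof (intro set_eqI iffI)
    fix v assume "v \<in> {v. v^3 \<noteq> 27 \<and> hessian_j v = hessian_j u}"
    then have v: "v^3 \<noteq> 27" "(tt v)^3 = (tt u)^3" by (auto simp: hj_tt)
    then have "tt v = tt u \<or> tt v = w * tt u \<or> tt v = w^2 * tt u" using W1 by blast
    then show "v \<in> f ` (C \<times> P)"
    proof (elim disjE)
      assume "tt v = tt u"
      then have "v \<in> P" using DP v by simp
      then have "(1, v) \<in> C \<times> P" "f (1, v) = v" by (auto simp: C_def f_def)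
      then show ?thesis by (metis image_eqI)
    next
      assume e: "tt v = w * tt u"
      have "(w^2*v)^3 = v^3" using w23 by (simp add: power_mult_distrib)
      moreover have "tt (w^2*v) = tt u" using e tt_mul[OF w23] w3 by (simp add: power3_eq_cube power2_eq_square mult.assoc[symmetric])
      ultimately have "w^2*v \<in> P" using DP v by simp
      moreover have "v = w * (w^2*v)" using w3 by (simp add: power3_eq_cube power2_eq_square mult.assoc[symmetric])
      ultimately have "(w, w^2*v) \<in> C \<times> P" "f (w, w^2*v) = v" by (auto simp: C_def f_def)
      then show ?thesis by (metis image_eqI)
    next
      assume e: "tt v = w^2 * tt u"
      have "(w*v)^3 = v^3" using w3 by (simp add: power_mult_distrib)
      moreover have "tt (w*v) = tt u" using e tt_mul[OF w3] w3 by (simp add: power3_eq_cube power2_eq_square mult.assoc[symmetric])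
      ultimately have "w*v \<in> P" using DP v by simp
      moreover have "v = w^2 * (w*v)" using w3 by (simp add: power3_eq_cube power2_eq_square mult.assoc[symmetric])
      ultimately have "(w^2, w*v) \<in> C \<times> P" "f (w^2, w*v) = v" by (auto simp: C_def f_def)
      then show ?thesis by (metis image_eqI)
    qed
  next
    fix v assume "v \<in> f ` (C \<times> P)"
    then obtain m x where mx: "m \<in> C" "x \<in> P" "v = m*x" by (auto simp: f_def)
    have m3: "m^3 = 1" using Cm mx(1) by simp
    have "v^3 = x^3" using mx(3) m3 by (simp add: power_mult_distrib)
    moreover have "hessian_j v = hessian_j u" using mx(3) tt_mul[OF m3] PD[OF mx(2)] m3
      by (simp add: hj_tt power_mult_distrib)
    ultimately show "v \<in> {v. v^3 \<noteq> 27 \<and> hessian_j v = hessian_j u}" using PD[OF mx(2)] by simp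
  qed
  have inj: "inj_on f (C \<times> P)"
  proof (rule inj_onI)
    fix p p' assume p: "p \<in> C \<times> P" and p': "p' \<in> C \<times> P" and e: "f p = f p'"
    obtain m x where pm: "p = (m,x)" by fastforce
    obtain m' x' where pm': "p' = (m',x')" by fastforce
    have mm: "m \<in> C" "x \<in> P" "m' \<in> C" "x' \<in> P" using p p' pm pm' by auto
    have e2: "m*x = m'*x'" using e pm pm' by (simp add: f_def)
    have "tt (m*x) = m * tt u" using tt_mul[OF Cm[OF mm(1)]] PD[OF mm(2)] by simp
    moreover have "tt (m'*x') = m' * tt u" using tt_mul[OF Cm[OF mm(3)]] PD[OF mm(4)] by simp
    ultimately have "m = m'" using e2 t0 by simp
    moreover have "m \<noteq> 0" using Cm[OF mm(1)] by auto
    ultimately have "x = x'" using e2 by simp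
    then show "p = p'" using pm pm' \<open>m = m'\<close> by simp
  qed
  have "card (f ` (C \<times> P)) = card (C \<times> P)" using inj by (rule card_image)
  also have "\<dots> = 12" using cardC cP by (simp add: C_def card_cartesian_product)
  finally show ?thesis using fib by simp
qed


lemma cardD: "card {u::'a. u^3 \<noteq> 27} + 3 = card (UNIV::'a set)"
proof -
  have T: "{u::'a. u^3 = 27} = {3, w*3, w^2*3}"
  proof -
    have "(u^3 = 27) = (u = 3 \<or> u = w*3 \<or> u = w^2*3)" for u :: 'a using W1[of u 3] by simp
    then show ?thesis by auto
  qed
  have "card {3, w*3, w^2*3} = 3" using h3 w1 w22 w2w by (auto simp: card_insert_if)
  moreover have "card {u::'a. u^3 \<noteq> 27} + card {u::'a. u^3 = 27} = card (UNIV::'a set)"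
    by (subst card_Un_disjoint[symmetric]) (auto intro: arg_cong[where f=card])
  ultimately show ?thesis using T by simp
qed

lemma E0_card: "card {u::'a. u^3 \<noteq> 27 \<and> tt u = 0} = (if (2::'a) = 0 then 1 else 4)"
proof -
  have n243: "(243::'a) \<noteq> 0"
  proof -
    have "(3::'a)*(3*(3*(3*3))) \<noteq> 0" using h3 by (simp only: mult_eq_0_iff de_Morgan_disj) blast
    then show ?thesis by simp
  qed
  have m6: "(m*(-6))^3 \<noteq> (27::'a)" if "m^3 = 1" for m :: 'a
  proof
    assume "(m*(-6))^3 = 27"
    then have "(-216::'a) = 27" using that by (simp add: power_mult_distrib)
    then have "(243::'a) = 0" by (simp add: algebra_simps)
    then show False using n243 by simp
  qed
  have S: "{u::'a. u^3 \<noteq> 27 \<and> tt u = 0} = {0, 1*(-6), w*(-6), w^2*(-6)}"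
  proof (intro set_eqI iffI)
    fix u assume "u \<in> {u::'a. u^3 \<noteq> 27 \<and> tt u = 0}"
    then have u: "u^3 \<noteq> 27" "tt u = 0" by auto
    then have "u*(u^3+216) = 0" by (simp add: tt_def)
    then have "u = 0 \<or> u^3 + 216 = 0" by simp
    moreover have "u^3 + 216 = 0 \<longleftrightarrow> u^3 = (-6)^3" by (simp add: algebra_simps eq_neg_iff_add_eq_0)
    ultimately have "u = 0 \<or> u^3 = (-6)^3" by blast
    moreover have "u^3 = (-6)^3 \<Longrightarrow> u = 1*(-6) \<or> u = w*(-6) \<or> u = w^2*(-6)" using W1[of u "-6"] by simp
    ultimately show "u \<in> {0, 1*(-6), w*(-6), w^2*(-6)}" by blast
  next
    fix u assume "u \<in> {0::'a, 1*(-6), w*(-6), w^2*(-6)}"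
    moreover have "(0::'a)^3 \<noteq> 27" using n27[OF h3] by simp
    moreover have "tt (m*(-6)) = 0" if "m^3 = 1" for m :: 'a using that by (simp add: tt_def power_mult_distrib)
    moreover have "tt 0 = (0::'a)" by (simp add: tt_def)
    moreover have "tt (-6) = (0::'a)" using \<open>\<And>m. m^3 = 1 \<Longrightarrow> tt (m*(-6)) = 0\<close>[of 1] by simp
    ultimately show "u \<in> {u::'a. u^3 \<noteq> 27 \<and> tt u = 0}" using m6[of 1] m6[OF w3] m6[OF w23] w3 w23 by auto
  qed
  show ?thesis
  proof (cases "(2::'a) = 0")
    case True
    have "(6::'a) = 2*3" by simp
    then have "(6::'a) = 0" using True by simp
    then show ?thesis unfolding S using True by simp
  next
    case False
    have "(2::'a)*3 \<noteq> 0" using False h3 by (simp only: mult_eq_0_iff de_Morgan_disj) blast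
    then have "(6::'a) \<noteq> 0" by simp
    then show ?thesis unfolding S using False w0 w1 w22 w2w by (auto simp: card_insert_if)
  qed
qed

lemma LL_scale: "LL b (b*z) (b*z) = b^2 * (z^2 - 6*z - 18)"
  by (simp add: LL_def algebra_simps power2_eq_square)

lemma E1_card:
  assumes h2: "(2::'a) \<noteq> 0"
  shows "card {u::'a. u^3 \<noteq> 27 \<and> hessian_j u = 1728} = 0 \<or> card {u::'a. u^3 \<noteq> 27 \<and> hessian_j u = 1728} = 6"
proof (cases "{u::'a. u^3 \<noteq> 27 \<and> hessian_j u = 1728} = {}")
  case True then show ?thesis by simp
next
  case False
  define C where "C = {1, w, w^2}"
  have Cm: "m \<in> C \<Longrightarrow> m^3 = 1" for m using Cm3 by (simp add: C_def)
  have Cnz: "m \<in> C \<Longrightarrow> m \<noteq> 0" for m using Cm by fastforce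
  have E1: "{u::'a. u^3 \<noteq> 27 \<and> hessian_j u = 1728} = {u. u^3 \<noteq> 27 \<and> (\<exists>b\<in>C. LL b u u = 0)}"
    using j1728 by (auto simp: C_def)
  obtain u0 a where u0: "u0^3 \<noteq> 27" "a \<in> C" "LL a u0 u0 = 0" using False unfolding E1 by auto
  define r where "r = u0 / a"
  have "u0 = a * r" using Cnz[OF u0(2)] by (simp add: r_def)
  then have "a^2 * (r^2 - 6*r - 18) = 0" using u0(3) LL_scale by metis
  then have r: "r^2 - 6*r - 18 = 0" using Cnz[OF u0(2)] by simp
  have r3: "r \<noteq> 3" using root_D[OF h3 r] by auto
  have r': "(6-r)^2 - 6*(6-r) - 18 = 0" using r by (simp add: algebra_simps power2_eq_square)
  have fac: "z^2 - 6*z - 18 = (z - r)*(z - (6-r))" for z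
  proof -
    have "(z - r)*(z - (6-r)) = z^2 - 6*z - (r^2 - 6*r)" by (simp add: algebra_simps power2_eq_square)
    then show ?thesis using r by (simp add: algebra_simps)
  qed
  define Z where "Z = {r, 6-r}"
  have Zr: "z \<in> Z \<Longrightarrow> z^2 - 6*z - 18 = 0" for z using r r' by (auto simp: Z_def)
  have n18: "(18::'a) \<noteq> 0"
  proof -
    have "(2::'a)*(3*3) \<noteq> 0" using h2 h3 by (simp only: mult_eq_0_iff de_Morgan_disj) blast
    then show ?thesis by simp
  qed
  have Znz: "z \<in> Z \<Longrightarrow> z \<noteq> 0" for z using Zr n18 by fastforce
  have cZ: "card Z = 2"
  proof -
    have "r \<noteq> 6 - r"
    proof
      assume "r = 6 - r" then have "2*(r-3) = 0" by (simp add: algebra_simps)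
      then have "r - 3 = 0" using h2 by (metis mult_eq_0_iff)
      then show False using r3 by simp
    qed
    then show ?thesis by (simp add: Z_def)
  qed
  have rs: "r^3 \<noteq> (6-r)^3"
  proof
    assume e: "r^3 = (6-r)^3"
    have "r^3 - (6-r)^3 = 108*(r-3) + (2*r - 6)*(r^2 - 6*r - 18)"
      by (simp add: algebra_simps power2_eq_square power3_eq_cube)
    then have "108*(r-3) = 0" using e r by simp
    moreover have "(108::'a) \<noteq> 0"
    proof -
      have "(2::'a)*(2*(3*(3*3))) \<noteq> 0" using h2 h3 by (simp only: mult_eq_0_iff de_Morgan_disj) blast
      then show ?thesis by simp
    qed
    ultimately have "r - 3 = 0" by (metis mult_eq_0_iff)
    then show False using r3 by simp
  qed
  define f where "f = (\<lambda>p::'a\<times>'a. fst p * snd p)"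
  have S: "{u. u^3 \<noteq> 27 \<and> (\<exists>b\<in>C. LL b u u = 0)} = f ` (C \<times> Z)"
  proof (intro set_eqI iffI)
    fix u assume "u \<in> {u. u^3 \<noteq> 27 \<and> (\<exists>b\<in>C. LL b u u = 0)}"
    then obtain b where b: "b \<in> C" "LL b u u = 0" by auto
    have "u = b * (u/b)" using Cnz[OF b(1)] by simp
    then have "b^2 * ((u/b)^2 - 6*(u/b) - 18) = 0" using b(2) LL_scale by metis
    then have "(u/b)^2 - 6*(u/b) - 18 = 0" using Cnz[OF b(1)] by simp
    then have "u/b \<in> Z" unfolding fac Z_def by auto
    moreover have "f (b, u/b) = u" using Cnz[OF b(1)] by (simp add: f_def)
    ultimately show "u \<in> f ` (C \<times> Z)" using b(1) by (metis SigmaI image_eqI)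
  next
    fix u assume "u \<in> f ` (C \<times> Z)"
    then obtain b z where bz: "b \<in> C" "z \<in> Z" "u = b*z" by (auto simp: f_def)
    have "u^3 = z^3" using bz Cm by (simp add: power_mult_distrib)
    moreover have "z^3 \<noteq> 27" using root_D[OF h3 Zr[OF bz(2)]] .
    moreover have "LL b u u = 0" using bz(3) LL_scale[of b z] Zr[OF bz(2)] by simp
    ultimately show "u \<in> {u. u^3 \<noteq> 27 \<and> (\<exists>b\<in>C. LL b u u = 0)}" using bz(1) by auto
  qed
  have inj: "inj_on f (C \<times> Z)"
  proof (rule inj_onI)
    fix p p' assume p: "p \<in> C \<times> Z" and p': "p' \<in> C \<times> Z" and e: "f p = f p'"
    obtain m x where pm: "p = (m,x)" by fastforce
    obtain m' x' where pm': "p' = (m',x')" by fastforce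
    have mm: "m \<in> C" "x \<in> Z" "m' \<in> C" "x' \<in> Z" using p p' pm pm' by auto
    have e2: "m*x = m'*x'" using e pm pm' by (simp add: f_def)
    then have "(m*x)^3 = (m'*x')^3" by simp
    then have "x^3 = x'^3" using Cm[OF mm(1)] Cm[OF mm(3)] by (simp add: power_mult_distrib)
    then have "x = x'" using mm(2,4) rs by (auto simp: Z_def)
    then have "m = m'" using e2 Znz[OF mm(2)] by simp
    then show "p = p'" using pm pm' \<open>x = x'\<close> by simp
  qed
  have "card (f ` (C \<times> Z)) = 6"
    using card_image[OF inj] cardC cZ by (simp add: C_def card_cartesian_product)
  then show ?thesis unfolding E1 S by simp
qed


lemma count_w: "card (hessian_j ` {u::'a. u^3 \<noteq> 27}) = (card (UNIV::'a set) + 11) div 12"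
proof -
  define D where "D = {u::'a. u^3 \<noteq> 27}"
  define E0 where "E0 = {u\<in>D. hessian_j u = 0}"
  define E1 where "E1 = {u\<in>D. hessian_j u = 1728}"
  define R where "R = {u\<in>D. hessian_j u \<noteq> 0 \<and> hessian_j u \<noteq> 1728}"
  have cD: "card D + 3 = card (UNIV::'a set)" using cardD by (simp add: D_def)
  have fin: "finite X" for X :: "'a set" by simp
  have cR: "card R = 12 * card (hessian_j ` R)"
  proof (rule card_fibers[OF fin])
    fix u assume u: "u \<in> R"
    have "{v\<in>R. hessian_j v = hessian_j u} = {v. v^3 \<noteq> 27 \<and> hessian_j v = hessian_j u}"
      using u by (auto simp: R_def D_def)
    moreover have "card {v. v^3 \<noteq> 27 \<and> hessian_j v = hessian_j u} = 12"
      using u j0[of u] j1728[of u] fib12[of u] by (auto simp: R_def D_def)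
    ultimately show "card {v\<in>R. hessian_j v = hessian_j u} = 12" by simp
  qed
  have E0e: "E0 = {u::'a. u^3 \<noteq> 27 \<and> tt u = 0}" using j0 by (auto simp: E0_def D_def)
  have jE0: "hessian_j ` E0 = {0}"
  proof -
    have "E0 \<noteq> {}" using E0_card unfolding E0e[symmetric] by (auto split: if_splits)
    then show ?thesis by (auto simp: E0_def)
  qed
  show ?thesis
  proof (cases "(2::'a) = 0")
    case True
    have "(1728::'a) = 2 * 864" by simp
    then have z: "(1728::'a) = 0" using True by simp
    have "D = R \<union> E0" "R \<inter> E0 = {}" using z by (auto simp: R_def E0_def)
    then have c1: "card D = card R + card E0" by (simp add: card_Un_disjoint)
    have c0: "card E0 = 1" using E0_card True E0e by simp
    have "hessian_j ` D = hessian_j ` R \<union> {0}" using jE0 \<open>D = R \<union> E0\<close> by auto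
    moreover have "0 \<notin> hessian_j ` R" by (auto simp: R_def)
    ultimately have "card (hessian_j ` D) = card (hessian_j ` R) + 1" by simp
    then show ?thesis using c1 c0 cR cD by (simp add: D_def)
  next
    case False
    have nz: "(1728::'a) \<noteq> 0"
    proof -
      have "(2::'a)*(2*(2*(2*(2*(2*(3*(3*3))))))) \<noteq> 0" using False h3 by (simp only: mult_eq_0_iff de_Morgan_disj) blast
      then show ?thesis by simp
    qed
    have "D = R \<union> (E0 \<union> E1)" "R \<inter> (E0 \<union> E1) = {}" "E0 \<inter> E1 = {}" using nz by (auto simp: R_def E0_def E1_def)
    then have c1: "card D = card R + card E0 + card E1" by (simp add: card_Un_disjoint)
    have c0: "card E0 = 4" using E0_card False E0e by simp
    have c2: "card E1 = 0 \<or> card E1 = 6" using E1_card[OF False] by (simp add: E1_def D_def)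
    have jD: "hessian_j ` D = hessian_j ` R \<union> ({0} \<union> hessian_j ` E1)" using jE0 \<open>D = R \<union> (E0 \<union> E1)\<close> by auto
    have dj: "hessian_j ` R \<inter> ({0} \<union> hessian_j ` E1) = {}" "0 \<notin> hessian_j ` E1" using nz by (auto simp: R_def E1_def)
    have "card (hessian_j ` D) = card (hessian_j ` R) + card ({0} \<union> hessian_j ` E1)"
      unfolding jD using dj by (simp add: card_Un_disjoint)
    moreover have "card ({0} \<union> hessian_j ` E1) = 1 + card (hessian_j ` E1)" using dj by simp
    moreover have "card (hessian_j ` E1) = (if card E1 = 0 then 0 else 1)"
    proof (cases "card E1 = 0")
      case True then have "E1 = {}" by simp
      then show ?thesis by simp
    next
      case False then have "E1 \<noteq> {}" by auto
      then have "hessian_j ` E1 = {1728}" by (auto simp: E1_def)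
      then show ?thesis using False by simp
    qed
    ultimately have "card (hessian_j ` D) = card (hessian_j ` R) + 1 + (if card E1 = 0 then 0 else 1)" by simp
    then show ?thesis using c1 c0 c2 cR cD by (auto simp: D_def)
  qed
qed

end


theorem mainTheorem12:
  fixes q :: nat
  assumes "q = card (UNIV :: 'a set)"
  shows "J_H TYPE('a::{finite,field}) =
           (if q mod 3 = 0 then q - 1
            else if q mod 3 = 1 then (q + 11) div 12
            else q div 2)"
proof -
  have J: "J_H TYPE('a) = card (hessian_j ` {u::'a. u^3 \<noteq> 27})" by (simp add: J_H_def)
  show ?thesis
  proof (cases "q mod 3 = 0")
    case True
    then have "(3::'a) = 0" using char3_iff[where 'a='a] assms by simp
    then show ?thesis using J count_char3[where 'a='a] assms True by simp
  next
    case False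
    then have h3: "(3::'a) \<noteq> 0" using char3_iff[where 'a='a] assms by simp
    show ?thesis
    proof (cases "q mod 3 = 1")
      case True
      then obtain w :: 'a where w: "w^2 + w + 1 = 0" using omega_exists[where 'a='a] assms by auto
      show ?thesis using J count_w[OF h3 w] assms True by simp
    next
      case F2: False
      have nw: "\<not> (\<exists>w::'a. w^2 + w + 1 = 0)" using omega_imp[OF h3] assms F2 by auto
      show ?thesis using J count_now[OF h3 nw] assms False F2 by simp
    qed
  qed
qed

end
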